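(* Assume that the mask $\mathbf{M} \in \mathbb{R}^{L \times L}$ supports matrix-vector multiplication (computing $\mathbf{M}\mathbf{x}$ for $\mathbf{x}\in\mathbb{R}^L$) in time $T_{\mathbf{M}}(L)$. Then the general masked kernel attention with mask $\mathbf{M}$, where the kernel is computed through the feature map $\phi:\mathbb{R}^{d_{QK}}\rightarrow\mathbb{R}^{m}$, can be implemented in time $O((T_{\mathbf{M}}(L)+L)md)$.
   Context: Let $L$ be the number of input tokens, with query and key matrices $\mathbf{Q},\mathbf{K}\in\mathbb{R}^{L\times d_{QK}}$ and value matrix $\mathbf{V}\in\mathbb{R}^{L\times d}$. The general masked kernel attention with mask $\mathbf{M}\in\mathbb{R}^{L\times L}$ is $\mathrm{Att}_{\mathrm{K}}(\mathbf{Q},\mathbf{K},\mathbf{V},\mathbf{M})=\mathbf{D}^{-1}\mathbf{A}\mathbf{V}$, where $\mathbf{A}=\mathbf{M}\odot\mathcal{K}(\mathbf{Q},\mathbf{K})$, $\mathbf{D}=\mathrm{diag}(\mathbf{A}\mathbf{1}_L)$, $\odot$ is the element-wise (Hadamard) product, $\mathbf{1}_L$ is the all-ones vector of length $L$, and $\mathcal{K}(\mathbf{Q},\mathbf{K})_{i,j}=\mathrm{K}(\mathbf{q}_i^{\top},\mathbf{k}_j^{\top})$ for the $i$th row $\mathbf{q}_i$ of $\mathbf{Q}$ and $j$th row $\mathbf{k}_j$ of $\mathbf{K}$. The kernel is assumed to be low-rank (linearizable) via a feature map $\phi:\mathbb{R}^{d_{QK}}\rightarrow\mathbb{R}^{m}$,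 i.e. $\mathrm{K}(\mathbf{x},\mathbf{y})=\phi(\mathbf{x})^{\top}\phi(\mathbf{y})$ (possibly only in expectation for a random feature map), so that the $i$th output is $\mathbf{r}_i=\frac{\phi(\mathbf{q}_i^{\top})^{\top}\sum_{j}\mathbf{M}_{i,j}\phi(\mathbf{k}_j^{\top})\mathbf{v}_j}{\phi(\mathbf{q}_i^{\top})^{\top}\sum_{j}\mathbf{M}_{i,j}\phi(\mathbf{k}_j^{\top})}$, with $\mathbf{v}_j$ the $j$th row of $\mathbf{V}$. *)

theory Defs
  imports Complex_Main
begin

text \<open>Matrices are functions nat => nat => real; row i of Q is Q i.
  The feature map phi sends a query/key row to a feature vector (index k < m).
  Kernel: K(x,y) = phi(x)^T phi(y).\<close>

definition kern :: "nat \<Rightarrow> ((nat \<Rightarrow> real) \<Rightarrow> (nat \<Rightarrow> real)) \<Rightarrow> (nat \<Rightarrow> real) \<Rightarrow> (nat \<Rightarrow> real) \<Rightarrow> real" where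
  "kern m phi x y = (\<Sum>k<m. phi x k * phi y k)"

definition attA :: "nat \<Rightarrow> ((nat \<Rightarrow> real) \<Rightarrow> (nat \<Rightarrow> real)) \<Rightarrow> (nat \<Rightarrow> nat \<Rightarrow> real)
    \<Rightarrow> (nat \<Rightarrow> nat \<Rightarrow> real) \<Rightarrow> (nat \<Rightarrow> nat \<Rightarrow> real) \<Rightarrow> nat \<Rightarrow> nat \<Rightarrow> real" where
  "attA m phi M Q K i j = M i j * kern m phi (Q i) (K j)"

text \<open>Att_K(Q,K,V,M) = D^{-1} A V with D = diag(A 1_L); entry (i,c).
  (Division by a zero diagonal entry follows HOL's convention x/0 = 0.)\<close>
definition att :: "nat \<Rightarrow> nat \<Rightarrow> ((nat \<Rightarrow> real) \<Rightarrow> (nat \<Rightarrow> real)) \<Rightarrow> (nat \<Rightarrow> nat \<Rightarrow> real)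
    \<Rightarrow> (nat \<Rightarrow> nat \<Rightarrow> real) \<Rightarrow> (nat \<Rightarrow> nat \<Rightarrow> real) \<Rightarrow> (nat \<Rightarrow> nat \<Rightarrow> real) \<Rightarrow> nat \<Rightarrow> nat \<Rightarrow> real" where
  "att L m phi M Q K V i c =
     (\<Sum>j<L. attA m phi M Q K i j * V j c) / (\<Sum>j<L. attA m phi M Q K i j)"

datatype addr = PhiQ nat nat | PhiK nat nat | Val nat nat | Out nat nat | Tmp nat

text \<open>Arithmetic costs 1; the only access to the mask M is
  the matrix-vector product oracle MatVec out inp, which writes
  out j := (M x)_j for j < L where x_k = mem(inp k), and costs T_M(L).\<close>
datatype instr =
    Const addr real
  | Add addr addr addr
  | Sub addr addr addr
  | Mul addr addr addr
  | Div addr addr addr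
  | MatVec "nat \<Rightarrow> addr" "nat \<Rightarrow> addr"

type_synonym mem = "addr \<Rightarrow> real"

fun exec_instr :: "nat \<Rightarrow> (nat \<Rightarrow> nat \<Rightarrow> real) \<Rightarrow> instr \<Rightarrow> mem \<Rightarrow> mem" where
  "exec_instr L M (Const a r) s = s(a := r)"
| "exec_instr L M (Add a b c) s = s(a := s b + s c)"
| "exec_instr L M (Sub a b c) s = s(a := s b - s c)"
| "exec_instr L M (Mul a b c) s = s(a := s b * s c)"
| "exec_instr L M (Div a b c) s = s(a := s b / s c)"
| "exec_instr L M (MatVec out inp) s =
     foldl (\<lambda>s' j. s'(out j := (\<Sum>k<L. M j k * s (inp k)))) s [0..<L]"

definition run :: "nat \<Rightarrow> (nat \<Rightarrow> nat \<Rightarrow> real) \<Rightarrow> instr list \<Rightarrow> mem \<Rightarrow> mem" where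
  "run L M P s = foldl (\<lambda>s' ins. exec_instr L M ins s') s P"

fun instr_cost :: "real \<Rightarrow> instr \<Rightarrow> real" where
  "instr_cost t (MatVec _ _) = t"
| "instr_cost t _ = 1"

definition prog_cost :: "real \<Rightarrow> instr list \<Rightarrow> real" where
  "prog_cost t P = sum_list (map (instr_cost t) P)"

fun init_mem :: "((nat \<Rightarrow> real) \<Rightarrow> (nat \<Rightarrow> real)) \<Rightarrow> (nat \<Rightarrow> nat \<Rightarrow> real)
    \<Rightarrow> (nat \<Rightarrow> nat \<Rightarrow> real) \<Rightarrow> (nat \<Rightarrow> nat \<Rightarrow> real) \<Rightarrow> mem" where
  "init_mem phi Q K V (PhiQ i k) = phi (Q i) k"
| "init_mem phi Q K V (PhiK j k) = phi (K j) k"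
| "init_mem phi Q K V (Val j c) = V j c"
| "init_mem phi Q K V (Out i c) = 0"
| "init_mem phi Q K V (Tmp n) = 0"

end

theory Submission
  imports Defs
begin

lemma run_Nil[simp]: "run L M [] s = s" by (simp add: run_def)
lemma run_Cons[simp]: "run L M (i # P) s = run L M P (exec_instr L M i s)" by (simp add: run_def)
lemma run_append[simp]: "run L M (P1 @ P2) s = run L M P2 (run L M P1 s)" by (simp add: run_def)

lemma run_binop:
  assumes ex: "\<And>a b c s. exec_instr L M (con a b c) s = s(a := f (s b) (s c))"
  and "distinct xs" "inj_on T (set xs)"
  and "\<And>x y. x \<in> set xs \<Longrightarrow> y \<in> set xs \<Longrightarrow> x \<noteq> y \<Longrightarrow> T x \<noteq> G y \<and> T x \<noteq> H y"
  shows "(\<forall>x\<in>set xs. run L M (map (\<lambda>x. con (T x) (G x) (H x)) xs) s (T x) = f (s (G x)) (s (H x)))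
     \<and> (\<forall>a. a \<notin> T ` set xs \<longrightarrow> run L M (map (\<lambda>x. con (T x) (G x) (H x)) xs) s a = s a)"
  using assms(2-)
proof (induction xs arbitrary: s)
  case Nil then show ?case by simp
next
  case (Cons x xs)
  let ?s1 = "s(T x := f (s (G x)) (s (H x)))"
  have IH: "(\<forall>y\<in>set xs. run L M (map (\<lambda>x. con (T x) (G x) (H x)) xs) ?s1 (T y) = f (?s1 (G y)) (?s1 (H y)))
     \<and> (\<forall>a. a \<notin> T ` set xs \<longrightarrow> run L M (map (\<lambda>x. con (T x) (G x) (H x)) xs) ?s1 a = ?s1 a)"
    using Cons.prems by (intro Cons.IH) auto
  have nx: "T x \<notin> T ` set xs" using Cons.prems by auto
  show ?case
  proof (intro conjI ballI allI impI)
    fix y assume y: "y \<in> set (x # xs)"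
    show "run L M (map (\<lambda>x. con (T x) (G x) (H x)) (x # xs)) s (T y) = f (s (G y)) (s (H y))"
    proof (cases "y = x")
      case True then show ?thesis using IH nx by (simp add: ex)
    next
      case False
      then have "y \<in> set xs" using y by auto
      moreover have "G y \<noteq> T x" "H y \<noteq> T x" using Cons.prems y False by (metis list.set_intros(1))+
      ultimately show ?thesis using IH by (simp add: ex)
    qed
  next
    fix a assume "a \<notin> T ` set (x # xs)"
    then show "run L M (map (\<lambda>x. con (T x) (G x) (H x)) (x # xs)) s a = s a" using IH by (simp add: ex)
  qed
qed

lemma foldl_upd:
  assumes "distinct xs" "inj_on out (set xs)"
  shows "(\<forall>x\<in>set xs. foldl (\<lambda>s' j. s'(out j := v j)) s xs (out x) = v x)
     \<and> (\<forall>a. a \<notin> out ` set xs \<longrightarrow> foldl (\<lambda>s' j. s'(out j := v j)) s xs a = s a)"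
  using assms
proof (induction xs arbitrary: s)
  case Nil then show ?case by simp
next
  case (Cons x xs)
  have IH: "(\<forall>y\<in>set xs. foldl (\<lambda>s' j. s'(out j := v j)) (s(out x := v x)) xs (out y) = v y)
     \<and> (\<forall>a. a \<notin> out ` set xs \<longrightarrow> foldl (\<lambda>s' j. s'(out j := v j)) (s(out x := v x)) xs a = (s(out x := v x)) a)"
    using Cons.prems by (intro Cons.IH) auto
  have nx: "out x \<notin> out ` set xs" using Cons.prems by auto
  have eq: "foldl (\<lambda>s' j. s'(out j := v j)) s (x # xs) = foldl (\<lambda>s' j. s'(out j := v j)) (s(out x := v x)) xs"
    by simp
  show ?case unfolding eq
  proof (intro conjI ballI allI impI)
    fix y assume "y \<in> set (x # xs)"
    then show "foldl (\<lambda>s' j. s'(out j := v j)) (s(out x := v x)) xs (out y) = v y"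
      using IH nx by (cases "y = x") auto
  next
    fix a assume "a \<notin> out ` set (x # xs)"
    then show "foldl (\<lambda>s' j. s'(out j := v j)) (s(out x := v x)) xs a = s a"
      using IH by auto
  qed
qed

definition ONE :: addr where "ONE = Tmp 0"
definition XR :: "nat \<Rightarrow> addr" where "XR j = Tmp (3*j+1)"
definition YR :: "nat \<Rightarrow> addr" where "YR j = Tmp (3*j+2)"
definition DR :: "nat \<Rightarrow> addr" where "DR j = Tmp (3*j+3)"

lemma regs_simps[simp]:
  "XR i = XR j \<longleftrightarrow> i = j" "YR i = YR j \<longleftrightarrow> i = j" "DR i = DR j \<longleftrightarrow> i = j"
  "XR i \<noteq> YR j" "YR j \<noteq> XR i" "XR i \<noteq> DR j" "DR j \<noteq> XR i" "YR i \<noteq> DR j" "DR j \<noteq> YR i"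
  "ONE \<noteq> XR i" "XR i \<noteq> ONE" "ONE \<noteq> YR i" "YR i \<noteq> ONE" "ONE \<noteq> DR i" "DR i \<noteq> ONE"
  by (auto simp: XR_def YR_def DR_def ONE_def) presburger+

lemma regs_simps2[simp]:
  "XR i \<noteq> PhiQ a b" "XR i \<noteq> PhiK a b" "XR i \<noteq> Val a b" "XR i \<noteq> Out a b"
  "YR i \<noteq> PhiQ a b" "YR i \<noteq> PhiK a b" "YR i \<noteq> Val a b" "YR i \<noteq> Out a b"
  "DR i \<noteq> PhiQ a b" "DR i \<noteq> PhiK a b" "DR i \<noteq> Val a b" "DR i \<noteq> Out a b"
  "ONE \<noteq> PhiQ a b" "ONE \<noteq> PhiK a b" "ONE \<noteq> Val a b" "ONE \<noteq> Out a b"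
  "PhiQ a b \<noteq> XR i" "PhiK a b \<noteq> XR i" "Val a b \<noteq> XR i" "Out a b \<noteq> XR i"
  "PhiQ a b \<noteq> YR i" "PhiK a b \<noteq> YR i" "Val a b \<noteq> YR i" "Out a b \<noteq> YR i"
  "PhiQ a b \<noteq> DR i" "PhiK a b \<noteq> DR i" "Val a b \<noteq> DR i" "Out a b \<noteq> DR i"
  "PhiQ a b \<noteq> ONE" "PhiK a b \<noteq> ONE" "Val a b \<noteq> ONE" "Out a b \<noteq> ONE"
  by (auto simp: XR_def YR_def DR_def ONE_def)

definition acc :: "(nat \<Rightarrow> addr) \<Rightarrow> nat \<Rightarrow> nat list \<Rightarrow> instr list" where
  "acc A k xs = concat (map (\<lambda>i. [Mul (YR i) (PhiQ i k) (YR i), Add (A i) (A i) (YR i)]) xs)"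

lemma run_acc:
  assumes "distinct xs" "inj A" "\<And>i j. A i \<noteq> YR j" "\<And>i j k. A i \<noteq> PhiQ j k"
  shows "(\<forall>x\<in>set xs. run L M (acc A k xs) s (A x) = s (A x) + s (PhiQ x k) * s (YR x))
     \<and> (\<forall>a. a \<notin> A ` set xs \<longrightarrow> a \<notin> YR ` set xs \<longrightarrow> run L M (acc A k xs) s a = s a)"
  using assms(1)
proof (induction xs arbitrary: s)
  case Nil then show ?case by (simp add: acc_def)
next
  case (Cons x xs)
  let ?s1 = "(s(YR x := s (PhiQ x k) * s (YR x)))(A x := s (A x) + s (PhiQ x k) * s (YR x))"
  have eq: "run L M (acc A k (x # xs)) s = run L M (acc A k xs) ?s1"
    using assms(3,4) by (simp add: acc_def) 
  have IH: "(\<forall>y\<in>set xs. run L M (acc A k xs) ?s1 (A y) = ?s1 (A y) + ?s1 (PhiQ y k) * ?s1 (YR y))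
     \<and> (\<forall>a. a \<notin> A ` set xs \<longrightarrow> a \<notin> YR ` set xs \<longrightarrow> run L M (acc A k xs) ?s1 a = ?s1 a)"
    using Cons.prems by (intro Cons.IH) auto
  have nx: "A x \<notin> A ` set xs" "YR x \<notin> YR ` set xs" using Cons.prems assms(2) by (auto simp: inj_eq)
  show ?case unfolding eq
  proof (intro conjI ballI allI impI)
    fix y assume y: "y \<in> set (x # xs)"
    show "run L M (acc A k xs) ?s1 (A y) = s (A y) + s (PhiQ y k) * s (YR y)"
    proof (cases "y = x")
      case True
      have "A x \<notin> YR ` set xs" using assms(3) by auto
      then have "run L M (acc A k xs) ?s1 (A x) = ?s1 (A x)" using IH nx by blast
      then show ?thesis using True by simp
    next
      case False
      then have "y \<in> set xs" using y by auto
      moreover have "PhiQ y k \<noteq> A x" "YR y \<noteq> A x" using assms(3,4) by metis+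
      ultimately show ?thesis using IH False assms by (simp add: inj_eq)
    qed
  next
    fix a assume "a \<notin> A ` set (x # xs)" "a \<notin> YR ` set (x # xs)"
    then show "run L M (acc A k xs) ?s1 a = s a" using IH by auto
  qed
qed

definition colblock :: "nat \<Rightarrow> (nat \<Rightarrow> addr) \<Rightarrow> (nat \<Rightarrow> addr) \<Rightarrow> nat \<Rightarrow> instr list" where
  "colblock L A src k = map (\<lambda>j. Mul (XR j) (PhiK j k) (src j)) [0..<L] @ [MatVec YR XR] @ acc A k [0..<L]"

definition scratch :: "addr \<Rightarrow> bool" where "scratch a \<longleftrightarrow> (\<exists>j. a = XR j \<or> a = YR j)"

lemma colblock_eff:
  assumes A: "inj A" "\<And>i j. A i \<noteq> XR j" "\<And>i j. A i \<noteq> YR j" "\<And>i j k. A i \<noteq> PhiQ j k"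
     "\<And>i j k. A i \<noteq> PhiK j k" "\<And>i j. A i \<noteq> src j"
  and S: "\<And>i j. src j \<noteq> XR i" "\<And>i j. src j \<noteq> YR i"
  shows "(\<forall>i<L. run L M (colblock L A src k) s (A i) = s (A i) + s (PhiQ i k) * (\<Sum>j<L. M i j * (s (PhiK j k) * s (src j))))
    \<and> (\<forall>a. \<not> scratch a \<longrightarrow> (\<forall>i<L. a \<noteq> A i) \<longrightarrow> run L M (colblock L A src k) s a = s a)"
proof -
  define s1 where "s1 = run L M (map (\<lambda>j. Mul (XR j) (PhiK j k) (src j)) [0..<L]) s"
  define s2 where "s2 = exec_instr L M (MatVec YR XR) s1"
  define s3 where "s3 = run L M (acc A k [0..<L]) s2"
  have r: "run L M (colblock L A src k) s = s3" by (simp add: colblock_def s1_def s2_def s3_def)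
  have "(\<forall>x\<in>set [0..<L]. s1 (XR x) = s (PhiK x k) * s (src x)) \<and> (\<forall>a. a \<notin> XR ` set [0..<L] \<longrightarrow> s1 a = s a)"
    unfolding s1_def
    by (rule run_binop[where con = Mul and f = "(*)" and T = XR and G = "\<lambda>j. PhiK j k" and H = src])
       (auto simp: inj_on_def S[symmetric])
  then have h1: "\<And>j. j < L \<Longrightarrow> s1 (XR j) = s (PhiK j k) * s (src j)"
    and h1': "\<And>a. a \<notin> XR ` {0..<L} \<Longrightarrow> s1 a = s a" by auto
  have s2e: "s2 = foldl (\<lambda>s' j. s'(YR j := (\<Sum>k<L. M j k * s1 (XR k)))) s1 [0..<L]"
    by (simp add: s2_def)
  have "(\<forall>x\<in>set [0..<L]. s2 (YR x) = (\<Sum>k<L. M x k * s1 (XR k))) \<and> (\<forall>a. a \<notin> YR ` set [0..<L] \<longrightarrow> s2 a = s1 a)"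
    unfolding s2e by (rule foldl_upd) (auto simp: inj_on_def)
  then have h2: "\<And>j. j < L \<Longrightarrow> s2 (YR j) = (\<Sum>k<L. M j k * s1 (XR k))"
    and h2': "\<And>a. a \<notin> YR ` {0..<L} \<Longrightarrow> s2 a = s1 a" by auto
  have "(\<forall>x\<in>set [0..<L]. s3 (A x) = s2 (A x) + s2 (PhiQ x k) * s2 (YR x))
     \<and> (\<forall>a. a \<notin> A ` set [0..<L] \<longrightarrow> a \<notin> YR ` set [0..<L] \<longrightarrow> s3 a = s2 a)"
    unfolding s3_def by (rule run_acc) (use A in auto)
  then have h3: "\<And>j. j < L \<Longrightarrow> s3 (A j) = s2 (A j) + s2 (PhiQ j k) * s2 (YR j)"
    and h3': "\<And>a. a \<notin> A ` {0..<L} \<Longrightarrow> a \<notin> YR ` {0..<L} \<Longrightarrow> s3 a = s2 a" by auto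
  show ?thesis unfolding r
  proof (intro conjI allI impI)
    fix i assume i: "i < L"
    have "A i \<notin> XR ` {0..<L}" "A i \<notin> YR ` {0..<L}" using A(2,3) by blast+
    then have "s2 (A i) = s (A i)" using h1' h2' by simp
    moreover have "PhiQ i k \<notin> XR ` {0..<L}" "PhiQ i k \<notin> YR ` {0..<L}" by auto
    then have "s2 (PhiQ i k) = s (PhiQ i k)" using h1' h2' by simp
    moreover have "s2 (YR i) = (\<Sum>j<L. M i j * (s (PhiK j k) * s (src j)))"
      using h2[OF i] h1 by simp
    ultimately show "s3 (A i) = s (A i) + s (PhiQ i k) * (\<Sum>j<L. M i j * (s (PhiK j k) * s (src j)))"
      using h3[OF i] by simp
  next
    fix a assume a: "\<not> scratch a" "\<forall>i<L. a \<noteq> A i"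
    then have "a \<notin> XR ` {0..<L}" "a \<notin> YR ` {0..<L}" "a \<notin> A ` {0..<L}" unfolding scratch_def by auto
    then show "s3 a = s a" using h1' h2' h3' by simp
  qed
qed

definition colloop :: "nat \<Rightarrow> (nat \<Rightarrow> addr) \<Rightarrow> (nat \<Rightarrow> addr) \<Rightarrow> nat \<Rightarrow> instr list" where
  "colloop L A src m = concat (map (colblock L A src) [0..<m])"

lemma colloop_eff:
  assumes A: "inj A" "\<And>i j. A i \<noteq> XR j" "\<And>i j. A i \<noteq> YR j" "\<And>i j k. A i \<noteq> PhiQ j k"
     "\<And>i j k. A i \<noteq> PhiK j k" "\<And>i j. A i \<noteq> src j"
  and S: "\<And>i j. src j \<noteq> XR i" "\<And>i j. src j \<noteq> YR i"
  shows "(\<forall>i<L. run L M (colloop L A src m) s (A i) = s (A i) + (\<Sum>k<m. s (PhiQ i k) * (\<Sum>j<L. M i j * (s (PhiK j k) * s (src j)))))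
    \<and> (\<forall>a. \<not> scratch a \<longrightarrow> (\<forall>i<L. a \<noteq> A i) \<longrightarrow> run L M (colloop L A src m) s a = s a)"
proof (induction m)
  case 0 then show ?case by (simp add: colloop_def)
next
  case (Suc m)
  define s' where "s' = run L M (colloop L A src m) s"
  have r: "run L M (colloop L A src (Suc m)) s = run L M (colblock L A src m) s'"
    by (simp add: colloop_def s'_def)
  note B = colblock_eff[OF A S, where L=L and M=M and k=m and s=s']
  have pq: "s' (PhiQ i k) = s (PhiQ i k)" if "i < L" for i k
    using Suc.IH A(4) unfolding s'_def scratch_def by (metis regs_simps2)
  have pk: "s' (PhiK j k) = s (PhiK j k)" for j k
    using Suc.IH A(5) unfolding s'_def scratch_def by (metis regs_simps2)
  have ps: "s' (src j) = s (src j)" for j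
    using Suc.IH A(6) S unfolding s'_def scratch_def by metis
  show ?case unfolding r
  proof (intro conjI allI impI)
    fix i assume i: "i < L"
    then show "run L M (colblock L A src m) s' (A i) = s (A i) + (\<Sum>k<Suc m. s (PhiQ i k) * (\<Sum>j<L. M i j * (s (PhiK j k) * s (src j))))"
      using B Suc.IH pq pk ps unfolding s'_def by simp
  next
    fix a assume "\<not> scratch a" "\<forall>i<L. a \<noteq> A i"
    then show "run L M (colblock L A src m) s' a = s a" using B Suc.IH unfolding s'_def by simp
  qed
qed

definition numloop :: "nat \<Rightarrow> nat \<Rightarrow> nat \<Rightarrow> instr list" where
  "numloop L d m = concat (map (\<lambda>c. colloop L (\<lambda>i. Out i c) (\<lambda>j. Val j c) m) [0..<d])"

lemma numloop_eff:
  "(\<forall>c<d. \<forall>i<L. run L M (numloop L d m) s (Out i c) = s (Out i c) + (\<Sum>k<m. s (PhiQ i k) * (\<Sum>j<L. M i j * (s (PhiK j k) * s (Val j c)))))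
    \<and> (\<forall>a. \<not> scratch a \<longrightarrow> (\<forall>c<d. \<forall>i<L. a \<noteq> Out i c) \<longrightarrow> run L M (numloop L d m) s a = s a)"
proof (induction d)
  case 0 then show ?case by (simp add: numloop_def)
next
  case (Suc d)
  define s' where "s' = run L M (numloop L d m) s"
  have r: "run L M (numloop L (Suc d) m) s = run L M (colloop L (\<lambda>i. Out i d) (\<lambda>j. Val j d) m) s'"
    by (simp add: numloop_def s'_def)
  have B: "(\<forall>i<L. run L M (colloop L (\<lambda>i. Out i d) (\<lambda>j. Val j d) m) s' (Out i d) = s' (Out i d) + (\<Sum>k<m. s' (PhiQ i k) * (\<Sum>j<L. M i j * (s' (PhiK j k) * s' (Val j d)))))
    \<and> (\<forall>a. \<not> scratch a \<longrightarrow> (\<forall>i<L. a \<noteq> Out i d) \<longrightarrow> run L M (colloop L (\<lambda>i. Out i d) (\<lambda>j. Val j d) m) s' a = s' a)"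
    by (rule colloop_eff) (auto simp: inj_def)
  have pq: "s' (PhiQ i k) = s (PhiQ i k)" "s' (PhiK i k) = s (PhiK i k)" "s' (Val i k) = s (Val i k)"
     "s' (Out i d) = s (Out i d)" for i k
    using Suc.IH unfolding s'_def scratch_def by auto
  show ?case unfolding r
  proof (intro conjI allI impI)
    fix c i assume c: "c < Suc d" and i: "i < L"
    show "run L M (colloop L (\<lambda>i. Out i d) (\<lambda>j. Val j d) m) s' (Out i c) = s (Out i c) + (\<Sum>k<m. s (PhiQ i k) * (\<Sum>j<L. M i j * (s (PhiK j k) * s (Val j c))))"
    proof (cases "c = d")
      case True then show ?thesis using B i pq by simp
    next
      case False
      then have "c < d" using c by simp
      moreover have "\<not> scratch (Out i c)" by (auto simp: scratch_def)
      ultimately show ?thesis using B Suc.IH i False unfolding s'_def by simp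
    qed
  next
    fix a assume "\<not> scratch a" "\<forall>c<Suc d. \<forall>i<L. a \<noteq> Out i c"
    then show "run L M (colloop L (\<lambda>i. Out i d) (\<lambda>j. Val j d) m) s' a = s a" using B Suc.IH unfolding s'_def by simp
  qed
qed

definition divs :: "nat \<Rightarrow> nat \<Rightarrow> instr list" where
  "divs L d = map (\<lambda>x. Div ((\<lambda>(c,i). Out i c) x) ((\<lambda>(c,i). Out i c) x) ((\<lambda>(c,i). DR i) x)) (List.product [0..<d] [0..<L])"

lemma divs_eff:
  "(\<forall>c<d. \<forall>i<L. run L M (divs L d) s (Out i c) = s (Out i c) / s (DR i))"
proof -
  have "(\<forall>x\<in>set (List.product [0..<d] [0..<L]). run L M (divs L d) s ((\<lambda>(c,i). Out i c) x)
      = s ((\<lambda>(c,i). Out i c) x) / s ((\<lambda>(c,i). DR i) x))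
     \<and> (\<forall>a. a \<notin> (\<lambda>(c,i). Out i c) ` set (List.product [0..<d] [0..<L]) \<longrightarrow> run L M (divs L d) s a = s a)"
    unfolding divs_def
    by (rule run_binop[where con = Div and f = "(/)"]) (auto simp: inj_on_def distinct_product)
  then show ?thesis by auto
qed

lemma prog_cost_append[simp]: "prog_cost t (P @ Q) = prog_cost t P + prog_cost t Q"
  by (simp add: prog_cost_def)
lemma prog_cost_Cons[simp]: "prog_cost t (i # Q) = instr_cost t i + prog_cost t Q"
  by (simp add: prog_cost_def)
lemma prog_cost_Nil[simp]: "prog_cost t [] = 0"
  by (simp add: prog_cost_def)

lemma prog_cost_concat:
  "(\<And>x. x \<in> set xs \<Longrightarrow> prog_cost t (f x) = c) \<Longrightarrow> prog_cost t (concat (map f xs)) = real (length xs) * c"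
  by (induction xs) (auto simp: algebra_simps)

lemma prog_cost_map:
  "(\<And>x. x \<in> set xs \<Longrightarrow> instr_cost t (f x) = c) \<Longrightarrow> prog_cost t (map f xs) = real (length xs) * c"
  by (induction xs) (auto simp: algebra_simps)

lemma cost_acc: "prog_cost t (acc A k xs) = 2 * real (length xs)"
  unfolding acc_def by (subst prog_cost_concat[where c = 2]) auto

lemma cost_colblock: "prog_cost t (colblock L A src k) = 3 * real L + t"
  unfolding colblock_def by (simp add: cost_acc prog_cost_map[where c = 1])

lemma cost_colloop: "prog_cost t (colloop L A src m) = real m * (3 * real L + t)"
  unfolding colloop_def by (simp add: cost_colblock prog_cost_concat[where c = "3 * real L + t"])

lemma cost_numloop: "prog_cost t (numloop L d m) = real d * (real m * (3 * real L + t))"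
  unfolding numloop_def by (simp add: cost_colloop prog_cost_concat[where c = "real m * (3 * real L + t)"])

lemma cost_divs: "prog_cost t (divs L d) = real L * real d"
  unfolding divs_def by (subst prog_cost_map[where c = 1]) (auto simp: length_product)

lemma att_alg:
  fixes pq :: "nat \<Rightarrow> real"
  shows "(\<Sum>k<m. pq k * (\<Sum>j<L. Mi j * (pk j k * v j))) = (\<Sum>j<L. Mi j * (\<Sum>k<m. pq k * pk j k) * v j)"
proof -
  have "(\<Sum>k<m. pq k * (\<Sum>j<L. Mi j * (pk j k * v j))) = (\<Sum>k<m. \<Sum>j<L. Mi j * (pq k * pk j k) * v j)"
    unfolding sum_distrib_left by (intro sum.cong refl) (simp add: ac_simps)
  also have "\<dots> = (\<Sum>j<L. \<Sum>k<m. Mi j * (pq k * pk j k) * v j)" by (rule sum.swap)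
  also have "\<dots> = (\<Sum>j<L. Mi j * (\<Sum>k<m. pq k * pk j k) * v j)"
    by (simp add: sum_distrib_left sum_distrib_right)
  finally show ?thesis .
qed

definition prog :: "nat \<Rightarrow> nat \<Rightarrow> nat \<Rightarrow> instr list" where
  "prog L m d = [Const ONE 1] @ colloop L DR (\<lambda>_. ONE) m @ numloop L d m @ divs L d"

lemma prog_correct:
  assumes i: "i < L" and c: "c < d"
  shows "run L M (prog L m d) (init_mem phi Q K V) (Out i c) = att L m phi M Q K V i c"
proof -
  define s0 where "s0 = init_mem phi Q K V"
  define s1 where "s1 = s0(ONE := 1)"
  define s2 where "s2 = run L M (colloop L DR (\<lambda>_. ONE) m) s1"
  define s3 where "s3 = run L M (numloop L d m) s2"
  have r: "run L M (prog L m d) s0 = run L M (divs L d) s3"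
    by (simp add: prog_def s1_def s2_def s3_def)
  have C2: "(\<forall>i<L. s2 (DR i) = s1 (DR i) + (\<Sum>k<m. s1 (PhiQ i k) * (\<Sum>j<L. M i j * (s1 (PhiK j k) * s1 ONE))))
    \<and> (\<forall>a. \<not> scratch a \<longrightarrow> (\<forall>i<L. a \<noteq> DR i) \<longrightarrow> s2 a = s1 a)"
    unfolding s2_def by (rule colloop_eff) (auto simp: inj_def)
  have ns: "\<not> scratch (PhiQ a b)" "\<not> scratch (PhiK a b)" "\<not> scratch (Val a b)" "\<not> scratch (Out a b)"
    "\<not> scratch (DR a)" for a b
    by (auto simp: scratch_def)
  have s2v: "s2 (PhiQ a b) = phi (Q a) b" "s2 (PhiK a b) = phi (K a) b" "s2 (Val a b) = V a b"
    "s2 (Out a b) = 0" for a b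
    using C2 ns by (auto simp: s1_def s0_def)
  have s2d: "s2 (DR i) = (\<Sum>k<m. phi (Q i) k * (\<Sum>j<L. M i j * (phi (K j) k * 1)))"
    using C2 i by (simp add: s1_def s0_def DR_def ONE_def)
  have C3: "(\<forall>c<d. \<forall>i<L. s3 (Out i c) = s2 (Out i c) + (\<Sum>k<m. s2 (PhiQ i k) * (\<Sum>j<L. M i j * (s2 (PhiK j k) * s2 (Val j c)))))
    \<and> (\<forall>a. \<not> scratch a \<longrightarrow> (\<forall>c<d. \<forall>i<L. a \<noteq> Out i c) \<longrightarrow> s3 a = s2 a)"
    unfolding s3_def by (rule numloop_eff)
  have s3o: "s3 (Out i c) = (\<Sum>k<m. phi (Q i) k * (\<Sum>j<L. M i j * (phi (K j) k * V j c)))"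
    using C3 i c s2v by simp
  have s3d: "s3 (DR i) = s2 (DR i)" using C3 ns by simp
  have "run L M (divs L d) s3 (Out i c) = s3 (Out i c) / s3 (DR i)"
    using divs_eff i c by blast
  also have "\<dots> = att L m phi M Q K V i c"
    unfolding s3o s3d s2d att_alg att_def attA_def kern_def by simp
  finally show ?thesis using r s0_def by simp
qed

lemma prog_cost_eq:
  "prog_cost t (prog L m d) = 1 + real m * (3 * real L + t) + real d * (real m * (3 * real L + t)) + real L * real d"
  by (simp add: prog_def cost_colloop cost_numloop cost_divs ONE_def)

lemma cost_bound:
  fixes t :: real
  assumes "t \<ge> 0" "L \<ge> 1" "m \<ge> 1" "d \<ge> 1"
  shows "1 + real m * (3 * real L + t) + real d * (real m * (3 * real L + t)) + real L * real d
     \<le> 8 * (t + real L) * real m * real d"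
proof -
  have L: "real L \<ge> 1" and m: "real m \<ge> 1" and d: "real d \<ge> 1" using assms by auto
  have md: "real m * real d \<ge> 1" using m d by (metis mult_mono' mult_1_left zero_le_one order_trans)
  have a: "t + real L \<ge> 1" using L assms(1) by simp
  have e1: "1 \<le> (t + real L) * (real m * real d)" using a md
    by (metis mult_mono' mult_1_left zero_le_one order_trans)
  have e2: "real m * (3 * real L + t) \<le> 3 * ((t + real L) * (real m * real d))"
  proof -
    have "real m * (3 * real L + t) \<le> real m * (3 * (t + real L))" using assms(1) m by (intro mult_left_mono) auto
    also have "\<dots> \<le> (real m * real d) * (3 * (t + real L))" using d m a
      by (intro mult_right_mono) (auto intro: order_trans[OF _ mult_right_mono[of 1 "real d"]])
    finally show ?thesis by (simp add: algebra_simps)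
  qed
  have e3: "real d * (real m * (3 * real L + t)) \<le> 3 * ((t + real L) * (real m * real d))"
    using assms(1) m d by (simp add: algebra_simps mult_left_mono)
  have e4: "real L * real d \<le> (t + real L) * (real m * real d)"
  proof -
    have "real L * real d \<le> (t + real L) * real d" using assms(1) d by (intro mult_right_mono) auto
    also have "\<dots> \<le> (t + real L) * (real m * real d)" using a m d
      by (intro mult_left_mono) (auto intro: order_trans[OF _ mult_right_mono[of 1 "real m"]])
    finally show ?thesis .
  qed
  show ?thesis using e1 e2 e3 e4 by (simp add: algebra_simps)
qed

theorem lemma3p1:
  "\<exists>C::real. C > 0 \<and>
     (\<forall>L m d :: nat. \<exists>P :: instr list.
        \<forall>(TM::real) (M::nat \<Rightarrow> nat \<Rightarrow> real) (phi::(nat \<Rightarrow> real) \<Rightarrow> (nat \<Rightarrow> real))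
          (Q::nat \<Rightarrow> nat \<Rightarrow> real) (K::nat \<Rightarrow> nat \<Rightarrow> real) (V::nat \<Rightarrow> nat \<Rightarrow> real).
          TM \<ge> 0 \<longrightarrow>
          (\<forall>i<L. \<forall>c<d. run L M P (init_mem phi Q K V) (Out i c) = att L m phi M Q K V i c)
          \<and> prog_cost TM P \<le> C * (TM + real L) * real m * real d)"
proof (intro exI[of _ 8] conjI allI)
  fix L m d :: nat
  show "\<exists>P. \<forall>TM M phi Q K V. TM \<ge> 0 \<longrightarrow>
          (\<forall>i<L. \<forall>c<d. run L M P (init_mem phi Q K V) (Out i c) = att L m phi M Q K V i c)
          \<and> prog_cost TM P \<le> 8 * (TM + real L) * real m * real d"
  proof (cases "L = 0 \<or> m = 0 \<or> d = 0")
    case True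
    show ?thesis
    proof (intro exI[of _ "[]"] allI impI conjI)
      fix TM :: real and M phi Q K V i c assume "TM \<ge> 0" "i < L" "c < d"
      then have "m = 0" using True by auto
      then show "run L M [] (init_mem phi Q K V) (Out i c) = att L m phi M Q K V i c"
        by (simp add: att_def attA_def kern_def)
    next
      fix TM :: real and M :: "nat \<Rightarrow> nat \<Rightarrow> real" and phi :: "(nat \<Rightarrow> real) \<Rightarrow> (nat \<Rightarrow> real)" and Q K V :: "nat \<Rightarrow> nat \<Rightarrow> real"
      assume "TM \<ge> 0"
      then show "prog_cost TM [] \<le> 8 * (TM + real L) * real m * real d" using True by auto
    qed
  next
    case False
    show ?thesis
    proof (intro exI[of _ "prog L m d"] allI impI conjI)
      fix TM :: real and M phi Q K V i c assume "i < L" "c < d"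
      then show "run L M (prog L m d) (init_mem phi Q K V) (Out i c) = att L m phi M Q K V i c"
        by (rule prog_correct)
    next
      fix TM :: real and M :: "nat \<Rightarrow> nat \<Rightarrow> real" and phi :: "(nat \<Rightarrow> real) \<Rightarrow> (nat \<Rightarrow> real)" and Q K V :: "nat \<Rightarrow> nat \<Rightarrow> real"
      assume "TM \<ge> 0"
      then show "prog_cost TM (prog L m d) \<le> 8 * (TM + real L) * real m * real d"
        using False cost_bound[of TM L m d] by (simp add: prog_cost_eq)
    qed
  qed
qed simp

end
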